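(* Let $\eta$ be a homogeneous integrable 2-form of degree two on $\mathbb{C}^4$ with $d\eta=d(z_1z_2)\wedge dz_3\wedge dz_4$ (i.e. $d\eta=i_X\nu$ with $X=z_1\partial/\partial z_1-z_2\partial/\partial z_2$, $\nu=dz_1\wedge\cdots\wedge dz_4$). Then there exist linear forms $A(z_3,z_4),B(z_3,z_4)$, a constant $a\in\mathbb{C}$ and a homogeneous quadratic polynomial $q(z_3,z_4)$ such that $\eta=d(z_1z_2)\wedge\big(A(z_3,z_4)\,dz_3+B(z_3,z_4)\,dz_4\big)+\big(a\,z_1z_2+q(z_3,z_4)\big)\,dz_3\wedge dz_4$.
   Context: A form is homogeneous of degree $m$ if its coefficients are homogeneous polynomials of degree $m$. A holomorphic $q$-form $\eta$ is integrable if every point $p$ outside its zero set has a neighborhood $V$ with holomorphic 1-forms $\omega_1,\dots,\omega_q$ on $V$ such that $\eta|_V=\omega_1\wedge\cdots\wedge\omega_q$ and $d\omega_j\wedge\eta=0$ for all $j$. *)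

theory Defs
  imports "HOL-Analysis.Analysis"
begin

text \<open>Points of C^4 are vectors of type complex^4. The coordinate z_k (k = 1..4)
  is the component at index of_nat k of the numeral type 4 (so z_4 is stored at index 0).\<close>

definition coord :: "nat \<Rightarrow> complex^4 \<Rightarrow> complex" where
  "coord k z = z $ (of_nat k :: 4)"

text \<open>Differential forms on (open subsets of) C^4, in coordinates:
  a 1-form is given by its coefficient functions: omega z k is the coefficient of dz_k (k = 1..4);
  a 2-form eta is given by eta z i j = coefficient of dz_i wedge dz_j for 1 <= i < j <= 4;
  a 3-form by coefficients for 1 <= i < j < k <= 4; a 4-form by its single coefficient
  with respect to dz_1 wedge dz_2 wedge dz_3 wedge dz_4.\<close>

type_synonym form1 = "complex^4 \<Rightarrow> nat \<Rightarrow> complex"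
type_synonym form2 = "complex^4 \<Rightarrow> nat \<Rightarrow> nat \<Rightarrow> complex"
type_synonym form3 = "complex^4 \<Rightarrow> nat \<Rightarrow> nat \<Rightarrow> nat \<Rightarrow> complex"
type_synonym form4 = "complex^4 \<Rightarrow> complex"

definition holo_on :: "(complex^4) set \<Rightarrow> (complex^4 \<Rightarrow> complex) \<Rightarrow> bool" where
  "holo_on V f \<longleftrightarrow> (\<forall>z\<in>V. \<exists>c::nat \<Rightarrow> complex.
      (f has_derivative (\<lambda>h. \<Sum>k=1..4. c k * coord k h)) (at z))"

definition pd :: "nat \<Rightarrow> (complex^4 \<Rightarrow> complex) \<Rightarrow> complex^4 \<Rightarrow> complex" where
  "pd k f z = deriv (\<lambda>t. f (z + axis (of_nat k :: 4) t)) 0"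

definition holo_form1_on :: "(complex^4) set \<Rightarrow> form1 \<Rightarrow> bool" where
  "holo_form1_on V \<omega> \<longleftrightarrow> (\<forall>k\<in>{1..4}. holo_on V (\<lambda>z. \<omega> z k))"

definition wedge11 :: "form1 \<Rightarrow> form1 \<Rightarrow> form2" where
  "wedge11 \<alpha> \<beta> z i j = \<alpha> z i * \<beta> z j - \<alpha> z j * \<beta> z i"

definition d1 :: "form1 \<Rightarrow> form2" where
  "d1 \<omega> z i j = pd i (\<lambda>w. \<omega> w j) z - pd j (\<lambda>w. \<omega> w i) z"

definition d2 :: "form2 \<Rightarrow> form3" where
  "d2 \<eta> z i j k = pd i (\<lambda>w. \<eta> w j k) z - pd j (\<lambda>w. \<eta> w i k) z + pd k (\<lambda>w. \<eta> w i j) z"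

definition wedge22 :: "form2 \<Rightarrow> form2 \<Rightarrow> form4" where
  "wedge22 \<alpha> \<beta> z =
     \<alpha> z 1 2 * \<beta> z 3 4 - \<alpha> z 1 3 * \<beta> z 2 4 + \<alpha> z 1 4 * \<beta> z 2 3
   + \<alpha> z 2 3 * \<beta> z 1 4 - \<alpha> z 2 4 * \<beta> z 1 3 + \<alpha> z 3 4 * \<beta> z 1 2"

definition eq_form2 :: "(complex^4) set \<Rightarrow> form2 \<Rightarrow> form2 \<Rightarrow> bool" where
  "eq_form2 V \<alpha> \<beta> \<longleftrightarrow> (\<forall>z\<in>V. \<forall>i j. 1 \<le> i \<and> i < j \<and> j \<le> 4 \<longrightarrow> \<alpha> z i j = \<beta> z i j)"

definition eq_form3 :: "(complex^4) set \<Rightarrow> form3 \<Rightarrow> form3 \<Rightarrow> bool" where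
  "eq_form3 V \<alpha> \<beta> \<longleftrightarrow>
     (\<forall>z\<in>V. \<forall>i j k. 1 \<le> i \<and> i < j \<and> j < k \<and> k \<le> 4 \<longrightarrow> \<alpha> z i j k = \<beta> z i j k)"

definition zero_set2 :: "form2 \<Rightarrow> (complex^4) set" where
  "zero_set2 \<eta> = {z. \<forall>i j. 1 \<le> i \<and> i < j \<and> j \<le> 4 \<longrightarrow> \<eta> z i j = 0}"

definition homog2_form2 :: "form2 \<Rightarrow> bool" where
  "homog2_form2 \<eta> \<longleftrightarrow> (\<forall>i j. 1 \<le> i \<and> i < j \<and> j \<le> 4 \<longrightarrow>
     (\<exists>c::nat \<Rightarrow> nat \<Rightarrow> complex. \<forall>z. \<eta> z i j = (\<Sum>a=1..4. \<Sum>b=1..4. c a b * coord a z * coord b z)))"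

definition integrable2 :: "form2 \<Rightarrow> bool" where
  "integrable2 \<eta> \<longleftrightarrow> (\<forall>p. p \<notin> zero_set2 \<eta> \<longrightarrow>
     (\<exists>V \<omega>1 \<omega>2. open V \<and> p \<in> V \<and> holo_form1_on V \<omega>1 \<and> holo_form1_on V \<omega>2 \<and>
        eq_form2 V \<eta> (wedge11 \<omega>1 \<omega>2) \<and>
        (\<forall>z\<in>V. wedge22 (d1 \<omega>1) \<eta> z = 0) \<and>
        (\<forall>z\<in>V. wedge22 (d1 \<omega>2) \<eta> z = 0)))"

definition dz :: "nat \<Rightarrow> form1" where
  "dz k z i = (if i = k then 1 else 0)"

definition dz1z2 :: form1 where
  "dz1z2 z i = (if i = 1 then coord 2 z else if i = 2 then coord 1 z else 0)"

definition dz1z2_dz3_dz4 :: form3 where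
  "dz1z2_dz3_dz4 z i j k =
     (if (i, j, k) = (1, 3, 4) then coord 2 z else if (i, j, k) = (2, 3, 4) then coord 1 z else 0)"

end

theory Submission
  imports Defs
begin


lemma of4_eq: "a \<in> {1..4} \<Longrightarrow> b \<in> {1..4} \<Longrightarrow> ((of_nat a :: 4) = of_nat b) = (a = b)"
  by (auto simp: atLeastAtMost_iff) (auto simp: le_Suc_eq numeral_eq_Suc elim!: le_SucE)

lemma coord_axis: "m \<in> {1..4} \<Longrightarrow> k \<in> {1..4} \<Longrightarrow>
   coord m (axis (of_nat k) t) = (if m = k then t else 0)"
  unfolding coord_def axis_def using of4_eq[of m k] by auto

lemma coord_add: "coord m (z + w) = coord m z + coord m w"
  by (simp add: coord_def)

lemma sum14: "(\<Sum>k::nat=1..4. f k) = f 1 + f 2 + f 3 + (f 4 :: 'a::comm_monoid_add)"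
  by (simp add: numeral_eq_Suc add.assoc)



lemma bl_axis: "bounded_linear (\<lambda>t::complex. axis i t :: complex^'n)"
proof (rule bounded_linear_intro[where K=1])
  fix x y :: complex show "axis i (x + y) = (axis i x + axis i y :: complex^'n)"
    by (simp add: axis_def vec_eq_iff)
next
  fix r :: real and x :: complex show "axis i (r *\<^sub>R x) = r *\<^sub>R (axis i x :: complex^'n)"
    by (simp add: axis_def vec_eq_iff)
next
  fix x :: complex
  have "norm (axis i x :: complex^'n) \<le> (\<Sum>j\<in>UNIV. norm ((axis i x :: complex^'n) $ j))"
    by (simp add: norm_vec_def L2_set_le_sum)
  also have "\<dots> = norm x"
    by (simp add: axis_def if_distrib sum.delta cong: if_cong)
  finally show "norm (axis i x :: complex^'n) \<le> norm x * 1" by simp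
qed

lemma holo_pd:
  assumes "holo_on V f" "z \<in> V" "k \<in> {1..4}"
  shows "((\<lambda>t. f (z + axis (of_nat k) t)) has_field_derivative pd k f z) (at 0)"
proof -
  obtain c where D: "(f has_derivative (\<lambda>h. \<Sum>m=1..4. c m * coord m h)) (at z)"
    using assms unfolding holo_on_def by blast
  have G: "((\<lambda>t. z + axis (of_nat k) t) has_derivative (\<lambda>t. axis (of_nat k) t)) (at 0)"
    using has_derivative_add[OF has_derivative_const bounded_linear_imp_has_derivative[OF bl_axis]]
    by simp
  have D': "(f has_derivative (\<lambda>h. \<Sum>m=1..4. c m * coord m h)) (at (z + axis (of_nat k) 0))"
    using D by (simp add: axis_def zero_vec_def[symmetric])
  have "((\<lambda>t. f (z + axis (of_nat k) t)) has_derivative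
        (\<lambda>t. \<Sum>m=1..4. c m * coord m (axis (of_nat k) t))) (at 0)"
    using has_derivative_compose[OF G D'] by (simp add: o_def)
  moreover have "(\<lambda>t. \<Sum>m=1..4. c m * coord m (axis (of_nat k) t)) = (\<lambda>t. c k * t)"
  proof
    fix t
    have "(\<Sum>m=1..4. c m * coord m (axis (of_nat k) t)) = (\<Sum>m=1..4. if m = k then c k * t else 0)"
      by (rule sum.cong) (use assms(3) in \<open>auto simp: coord_axis\<close>)
    also have "\<dots> = c k * t" using assms(3) by (simp add: sum.delta)
    finally show "(\<Sum>m=1..4. c m * coord m (axis (of_nat k) t)) = c k * t" .
  qed
  ultimately have H: "((\<lambda>t. f (z + axis (of_nat k) t)) has_field_derivative c k) (at 0)"
    by (simp add: has_field_derivative_def)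
  hence "pd k f z = c k" unfolding pd_def by (rule DERIV_imp_deriv)
  with H show ?thesis by simp
qed



lemma axis0[simp]: "axis i (0::complex) = (0::complex^'n)"
  by (simp add: axis_def vec_eq_iff)

lemma pd_prod_local:
  assumes V: "open V" "z \<in> V" and k: "k \<in> {1..4}"
    and H: "holo_on V f1" "holo_on V g1" "holo_on V f2" "holo_on V g2"
    and E: "\<forall>w\<in>V. h w = f1 w * g1 w - f2 w * g2 w"
  shows "pd k h z = pd k f1 z * g1 z + f1 z * pd k g1 z - (pd k f2 z * g2 z + f2 z * pd k g2 z)"
proof -
  let ?S = "(\<lambda>t. z + axis (of_nat k) t) -` V"
  have cont: "continuous_on UNIV (\<lambda>t::complex. z + axis (of_nat k) t)"
    by (intro continuous_on_add continuous_on_const linear_continuous_on bl_axis)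
  have oS: "open ?S" using open_vimage[OF V(1) cont] .
  have S0: "0 \<in> ?S" using V(2) by simp
  have D: "((\<lambda>t. f1 (z + axis (of_nat k) t) * g1 (z + axis (of_nat k) t)
              - f2 (z + axis (of_nat k) t) * g2 (z + axis (of_nat k) t)) has_field_derivative
        (pd k f1 z * g1 z + f1 z * pd k g1 z - (pd k f2 z * g2 z + f2 z * pd k g2 z))) (at 0)"
    using DERIV_diff[OF DERIV_mult[OF holo_pd[OF H(1) V(2) k] holo_pd[OF H(2) V(2) k]]
                        DERIV_mult[OF holo_pd[OF H(3) V(2) k] holo_pd[OF H(4) V(2) k]]]
    by (simp add: mult.commute)
  have D2: "((\<lambda>t. h (z + axis (of_nat k) t)) has_field_derivative
        (pd k f1 z * g1 z + f1 z * pd k g1 z - (pd k f2 z * g2 z + f2 z * pd k g2 z))) (at 0)"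
    by (rule has_field_derivative_transform_within_open[OF D oS S0]) (use E in auto)
  show ?thesis unfolding pd_def[of k h] by (rule DERIV_imp_deriv[OF D2])
qed



lemma step1:
  assumes I: "integrable2 \<eta>" and D: "eq_form3 UNIV (d2 \<eta>) dz1z2_dz3_dz4"
  shows "coord 2 z * \<eta> z 1 2 = 0 \<and> coord 1 z * \<eta> z 1 3 = coord 2 z * \<eta> z 2 3
       \<and> coord 1 z * \<eta> z 1 4 = coord 2 z * \<eta> z 2 4"
proof (cases "z \<in> zero_set2 \<eta>")
  case True then show ?thesis unfolding zero_set2_def by force
next
  case False
  then obtain V \<omega>1 \<omega>2 where V: "open V" "z \<in> V" and H1: "holo_form1_on V \<omega>1"
    and H2: "holo_form1_on V \<omega>2" and E: "eq_form2 V \<eta> (wedge11 \<omega>1 \<omega>2)"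
    and W1: "wedge22 (d1 \<omega>1) \<eta> z = 0" and W2: "wedge22 (d1 \<omega>2) \<eta> z = 0"
    using I False unfolding integrable2_def by metis
  define a where "a i = \<omega>1 z i" for i
  define b where "b i = \<omega>2 z i" for i
  define P where "P k i = pd k (\<lambda>w. \<omega>1 w i) z" for k i
  define Q where "Q k i = pd k (\<lambda>w. \<omega>2 w i) z" for k i
  have PD: "pd k (\<lambda>w. \<eta> w i j) z = P k i * b j + a i * Q k j - (P k j * b i + a j * Q k i)"
    if "k \<in> {1..4}" "i \<in> {1..4}" "j \<in> {1..4}" "i < j" for k i j
    unfolding a_def b_def P_def Q_def
    by (rule pd_prod_local[OF V that(1)])
       (use H1 H2 E that in \<open>auto simp: holo_form1_on_def eq_form2_def wedge11_def\<close>)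
  have EZ: "\<eta> z i j = a i * b j - a j * b i" if "1 \<le> i" "i < j" "j \<le> 4" for i j
    using E V(2) that unfolding eq_form2_def wedge11_def a_def b_def by auto
  have d123: "d2 \<eta> z 1 2 3 = 0" and d124: "d2 \<eta> z 1 2 4 = 0"
    and d134: "d2 \<eta> z 1 3 4 = coord 2 z" and d234: "d2 \<eta> z 2 3 4 = coord 1 z"
    using D unfolding eq_form3_def dz1z2_dz3_dz4_def by auto
  note dd = d123 d124 d134 d234
  have p1_23: "pd 1 (\<lambda>w. \<eta> w 2 3) z = P 1 2 * b 3 + a 2 * Q 1 3 - (P 1 3 * b 2 + a 3 * Q 1 2)"
    by (rule PD) auto
  have p2_13: "pd 2 (\<lambda>w. \<eta> w 1 3) z = P 2 1 * b 3 + a 1 * Q 2 3 - (P 2 3 * b 1 + a 3 * Q 2 1)"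
    by (rule PD) auto
  have p3_12: "pd 3 (\<lambda>w. \<eta> w 1 2) z = P 3 1 * b 2 + a 1 * Q 3 2 - (P 3 2 * b 1 + a 2 * Q 3 1)"
    by (rule PD) auto
  have p1_24: "pd 1 (\<lambda>w. \<eta> w 2 4) z = P 1 2 * b 4 + a 2 * Q 1 4 - (P 1 4 * b 2 + a 4 * Q 1 2)"
    by (rule PD) auto
  have p2_14: "pd 2 (\<lambda>w. \<eta> w 1 4) z = P 2 1 * b 4 + a 1 * Q 2 4 - (P 2 4 * b 1 + a 4 * Q 2 1)"
    by (rule PD) auto
  have p4_12: "pd 4 (\<lambda>w. \<eta> w 1 2) z = P 4 1 * b 2 + a 1 * Q 4 2 - (P 4 2 * b 1 + a 2 * Q 4 1)"
    by (rule PD) auto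
  have p1_34: "pd 1 (\<lambda>w. \<eta> w 3 4) z = P 1 3 * b 4 + a 3 * Q 1 4 - (P 1 4 * b 3 + a 4 * Q 1 3)"
    by (rule PD) auto
  have p3_14: "pd 3 (\<lambda>w. \<eta> w 1 4) z = P 3 1 * b 4 + a 1 * Q 3 4 - (P 3 4 * b 1 + a 4 * Q 3 1)"
    by (rule PD) auto
  have p4_13: "pd 4 (\<lambda>w. \<eta> w 1 3) z = P 4 1 * b 3 + a 1 * Q 4 3 - (P 4 3 * b 1 + a 3 * Q 4 1)"
    by (rule PD) auto
  have p2_34: "pd 2 (\<lambda>w. \<eta> w 3 4) z = P 2 3 * b 4 + a 3 * Q 2 4 - (P 2 4 * b 3 + a 4 * Q 2 3)"
    by (rule PD) auto
  have p3_24: "pd 3 (\<lambda>w. \<eta> w 2 4) z = P 3 2 * b 4 + a 2 * Q 3 4 - (P 3 4 * b 2 + a 4 * Q 3 2)"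
    by (rule PD) auto
  have p4_23: "pd 4 (\<lambda>w. \<eta> w 2 3) z = P 4 2 * b 3 + a 2 * Q 4 3 - (P 4 3 * b 2 + a 3 * Q 4 2)"
    by (rule PD) auto
  note dd = dd[unfolded d2_def p1_23 p2_13 p3_12 p1_24 p2_14 p4_12 p1_34 p3_14 p4_13 p2_34 p3_24 p4_23]
  note W1 = W1[unfolded wedge22_def d1_def, simplified EZ, folded P_def]
  note W2 = W2[unfolded wedge22_def d1_def, simplified EZ, folded Q_def]

  have A1: "coord 2 z * a 2 - coord 1 z * a 1 = 0"
    using dd W1 by algebra
  have A2: "coord 2 z * b 2 - coord 1 z * b 1 = 0"
    using dd W2 by algebra
  have e12: "\<eta> z 1 2 = a 1 * b 2 - a 2 * b 1" by (rule EZ) auto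
  have e13: "\<eta> z 1 3 = a 1 * b 3 - a 3 * b 1" by (rule EZ) auto
  have e14: "\<eta> z 1 4 = a 1 * b 4 - a 4 * b 1" by (rule EZ) auto
  have e23: "\<eta> z 2 3 = a 2 * b 3 - a 3 * b 2" by (rule EZ) auto
  have e24: "\<eta> z 2 4 = a 2 * b 4 - a 4 * b 2" by (rule EZ) auto
  show ?thesis unfolding e12 e13 e14 e23 e24 using A1 A2 by algebra
qed



definition qf :: "(nat \<Rightarrow> nat \<Rightarrow> complex) \<Rightarrow> complex^4 \<Rightarrow> complex" where
  "qf c z = (\<Sum>a=1..4. \<Sum>b=1..4. c a b * coord a z * coord b z)"

lemma coord_shift: "a \<in> {1..4} \<Longrightarrow> k \<in> {1..4} \<Longrightarrow>
  coord a (z + axis (of_nat k) t) = coord a z + of_bool (a = k) * t"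
  by (simp add: coord_add coord_axis)

lemma pd_qf:
  assumes k: "k \<in> {1..4}"
  shows "pd k (qf c) z = (\<Sum>b=1..4. (c k b + c b k) * coord b z)"
proof -
  have F: "qf c (z + axis (of_nat k) t) =
     (\<Sum>a=1..4. \<Sum>b=1..4. c a b * (coord a z + of_bool (a = k) * t) * (coord b z + of_bool (b = k) * t))"
    for t unfolding qf_def
    apply (intro sum.cong refl)
    subgoal for a b using coord_shift[OF _ k, of a z t] coord_shift[OF _ k, of b z t] by simp
    done
  have D: "((\<lambda>t. \<Sum>a=1..4. \<Sum>b=1..4. c a b * (coord a z + of_bool (a = k) * t) * (coord b z + of_bool (b = k) * t))
     has_field_derivative (\<Sum>a=1..4. \<Sum>b=1..4. c a b * (of_bool (a = k) * coord b z + coord a z * of_bool (b = k)))) (at 0)"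
    by (auto intro!: derivative_eq_intros sum.cong simp: algebra_simps)
  have "(\<Sum>a=1..4. \<Sum>b=1..4. c a b * (of_bool (a = k) * coord b z + coord a z * of_bool (b = k)))
        = (\<Sum>b=1..4. (c k b + c b k) * coord b z)"
  proof -
    have "k = 1 \<or> k = 2 \<or> k = 3 \<or> k = 4" using k by auto
    then show ?thesis by (simp only: sum14) (elim disjE; simp add: algebra_simps)
  qed
  then show ?thesis using DERIV_imp_deriv[OF D] unfolding pd_def F by simp
qed



definition mk :: "complex \<Rightarrow> complex \<Rightarrow> complex \<Rightarrow> complex \<Rightarrow> complex^4" where
  "mk x1 x2 x3 x4 = (\<chi> i. if i = 1 then x1 else if i = 2 then x2 else if i = 3 then x3 else x4)"

lemma coord_mk[simp]: "coord 1 (mk x1 x2 x3 x4) = x1" "coord 2 (mk x1 x2 x3 x4) = x2"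
  "coord 3 (mk x1 x2 x3 x4) = x3" "coord 4 (mk x1 x2 x3 x4) = x4"
  by (simp_all add: coord_def mk_def)

lemma qf_exp: "qf c z =
   c 1 1 * coord 1 z * coord 1 z + c 1 2 * coord 1 z * coord 2 z + c 1 3 * coord 1 z * coord 3 z + c 1 4 * coord 1 z * coord 4 z +
   c 2 1 * coord 2 z * coord 1 z + c 2 2 * coord 2 z * coord 2 z + c 2 3 * coord 2 z * coord 3 z + c 2 4 * coord 2 z * coord 4 z +
   c 3 1 * coord 3 z * coord 1 z + c 3 2 * coord 3 z * coord 2 z + c 3 3 * coord 3 z * coord 3 z + c 3 4 * coord 3 z * coord 4 z +
   c 4 1 * coord 4 z * coord 1 z + c 4 2 * coord 4 z * coord 2 z + c 4 3 * coord 4 z * coord 3 z + c 4 4 * coord 4 z * coord 4 z"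
  unfolding qf_def sum14 by (simp add: algebra_simps)

lemma pd_qf_exp: "k \<in> {1..4} \<Longrightarrow> pd k (qf c) z =
  (c k 1 + c 1 k) * coord 1 z + (c k 2 + c 2 k) * coord 2 z + (c k 3 + c 3 k) * coord 3 z + (c k 4 + c 4 k) * coord 4 z"
  by (simp only: pd_qf sum14)

lemma quad0: fixes a b c :: complex assumes "\<And>t. a + b*t + c*t^2 = 0"
  shows "a = 0 \<and> b = 0 \<and> c = 0"
proof -
  have h0: "a = 0" using assms[of 0] by simp
  have h1: "b + c = 0" using assms[of 1] h0 by simp
  have h2: "c - b = 0" using assms[of "-1"] h0 by simp
  have "2 * c = 0" using h1 h2 by algebra
  hence "c = 0" by simp
  with h0 h1 show ?thesis by simp
qed

lemma cub0: fixes a b c d :: complex assumes "\<And>t. a + b*t + c*t^2 + d*t^3 = 0"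
  shows "a = 0 \<and> b = 0 \<and> c = 0 \<and> d = 0"
proof -
  have h0: "a = 0" using assms[of 0] by simp
  have h1: "b + c + d = 0" using assms[of 1] h0 by simp
  have h2: "- b + c - d = 0" using assms[of "-1"] h0 by (simp add: algebra_simps)
  have h3: "2*b + 4*c + 8*d = 0" using assms[of "2"] h0 by (simp add: algebra_simps)
  have "2 * c = 0" using h1 h2 by algebra
  hence c: "c = 0" by simp
  have "6 * d = 0" using h1 h3 c by algebra
  hence "d = 0" by simp
  with h0 h1 c show ?thesis by simp
qed



lemma final_form:
  fixes \<eta> :: form2 and c13 c14 c23 c24 c34 :: "nat \<Rightarrow> nat \<Rightarrow> complex"
  assumes e12: "\<And>z. \<eta> z 1 2 = 0"
    and e13: "\<And>z. \<eta> z 1 3 = coord 2 z * (\<alpha>3 * coord 3 z + \<alpha>4 * coord 4 z)"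
    and e14: "\<And>z. \<eta> z 1 4 = coord 2 z * (\<beta>3 * coord 3 z + \<beta>4 * coord 4 z)"
    and e23: "\<And>z. \<eta> z 2 3 = coord 1 z * (\<alpha>3 * coord 3 z + \<alpha>4 * coord 4 z)"
    and e24: "\<And>z. \<eta> z 2 4 = coord 1 z * (\<beta>3 * coord 3 z + \<beta>4 * coord 4 z)"
    and e34: "\<And>z. \<eta> z 3 4 = a * coord 1 z * coord 2 z
                 + (q33 * coord 3 z ^ 2 + q34 * coord 3 z * coord 4 z + q44 * coord 4 z ^ 2)"
  shows "eq_form2 UNIV \<eta>
       (\<lambda>z i j. wedge11 dz1z2
                  (\<lambda>w k. (\<alpha>3 * coord 3 w + \<alpha>4 * coord 4 w) * dz 3 w k
                        + (\<beta>3 * coord 3 w + \<beta>4 * coord 4 w) * dz 4 w k) z i j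
              + (a * coord 1 z * coord 2 z
                 + (q33 * coord 3 z ^ 2 + q34 * coord 3 z * coord 4 z + q44 * coord 4 z ^ 2))
                * wedge11 (dz 3) (dz 4) z i j)"
  unfolding eq_form2_def
proof (intro ballI allI impI)
  fix z :: "complex^4" and i j :: nat assume ij: "1 \<le> i \<and> i < j \<and> j \<le> 4"
  then have "(i,j) \<in> {(1,2),(1,3),(1,4),(2,3),(2,4),(3,4)}" by auto
  then show "\<eta> z i j = wedge11 dz1z2
                  (\<lambda>w k. (\<alpha>3 * coord 3 w + \<alpha>4 * coord 4 w) * dz 3 w k
                        + (\<beta>3 * coord 3 w + \<beta>4 * coord 4 w) * dz 4 w k) z i j
              + (a * coord 1 z * coord 2 z
                 + (q33 * coord 3 z ^ 2 + q34 * coord 3 z * coord 4 z + q44 * coord 4 z ^ 2))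
                * wedge11 (dz 3) (dz 4) z i j"
    by (elim insertE emptyE) (simp_all add: wedge11_def dz1z2_def dz_def e12 e13 e14 e23 e24 e34 e12[unfolded One_nat_def] e13[unfolded One_nat_def] e14[unfolded One_nat_def] algebra_simps)
qed


theorem mainTheorem18:
  fixes \<eta> :: form2
  assumes "homog2_form2 \<eta>"
    and "integrable2 \<eta>"
    and "eq_form3 UNIV (d2 \<eta>) dz1z2_dz3_dz4"
  shows "\<exists>(\<alpha>3::complex) \<alpha>4 \<beta>3 \<beta>4 (a::complex) q33 q34 q44.
     eq_form2 UNIV \<eta>
       (\<lambda>z i j. wedge11 dz1z2
                  (\<lambda>w k. (\<alpha>3 * coord 3 w + \<alpha>4 * coord 4 w) * dz 3 w k
                        + (\<beta>3 * coord 3 w + \<beta>4 * coord 4 w) * dz 4 w k) z i j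
              + (a * coord 1 z * coord 2 z
                 + (q33 * coord 3 z ^ 2 + q34 * coord 3 z * coord 4 z + q44 * coord 4 z ^ 2))
                * wedge11 (dz 3) (dz 4) z i j)"
proof -
  have HG: "\<exists>c. \<forall>z. \<eta> z i j = qf c z" if "1 \<le> i" "i < j" "j \<le> 4" for i j
    using assms(1) that unfolding homog2_form2_def qf_def by blast
  obtain c12 where C12: "\<And>z. \<eta> z 1 2 = qf c12 z" using HG[of 1 2] by auto
  have L12: "(\<lambda>w. \<eta> w 1 2) = qf c12" by (rule ext) (rule C12)
  obtain c13 where C13: "\<And>z. \<eta> z 1 3 = qf c13 z" using HG[of 1 3] by auto
  have L13: "(\<lambda>w. \<eta> w 1 3) = qf c13" by (rule ext) (rule C13)
  obtain c14 where C14: "\<And>z. \<eta> z 1 4 = qf c14 z" using HG[of 1 4] by auto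
  have L14: "(\<lambda>w. \<eta> w 1 4) = qf c14" by (rule ext) (rule C14)
  obtain c23 where C23: "\<And>z. \<eta> z 2 3 = qf c23 z" using HG[of 2 3] by auto
  have L23: "(\<lambda>w. \<eta> w 2 3) = qf c23" by (rule ext) (rule C23)
  obtain c24 where C24: "\<And>z. \<eta> z 2 4 = qf c24 z" using HG[of 2 4] by auto
  have L24: "(\<lambda>w. \<eta> w 2 4) = qf c24" by (rule ext) (rule C24)
  obtain c34 where C34: "\<And>z. \<eta> z 3 4 = qf c34 z" using HG[of 3 4] by auto
  have L34: "(\<lambda>w. \<eta> w 3 4) = qf c34" by (rule ext) (rule C34)
  have F1: "coord 2 z * qf c12 z = 0" for z using step1[OF assms(2,3), of z] C12 by simp
  have F3: "coord 1 z * qf c13 z - coord 2 z * qf c23 z = 0" for z using step1[OF assms(2,3), of z] C13 C23 by simp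
  have F4: "coord 1 z * qf c14 z - coord 2 z * qf c24 z = 0" for z using step1[OF assms(2,3), of z] C14 C24 by simp
  have Dall: "d2 \<eta> z 1 2 3 = 0" "d2 \<eta> z 1 2 4 = 0" "d2 \<eta> z 1 3 4 = coord 2 z" "d2 \<eta> z 2 3 4 = coord 1 z" for z
    using assms(3) unfolding eq_form3_def dz1z2_dz3_dz4_def by auto
  have D123: "pd 1 (qf c23) z - pd 2 (qf c13) z + pd 3 (qf c12) z = 0" for z
    using Dall(1)[of z] unfolding d2_def L12 L13 L23 .
  have D124: "pd 1 (qf c24) z - pd 2 (qf c14) z + pd 4 (qf c12) z = 0" for z
    using Dall(2)[of z] unfolding d2_def L12 L14 L24 .
  have D134: "pd 1 (qf c34) z - pd 3 (qf c14) z + pd 4 (qf c13) z = coord 2 z" for z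
    using Dall(3)[of z] unfolding d2_def L13 L14 L34 .
  have D234: "pd 2 (qf c34) z - pd 3 (qf c24) z + pd 4 (qf c23) z = coord 1 z" for z
    using Dall(4)[of z] unfolding d2_def L23 L24 L34 .
  have k1: "(1::nat) \<in> {1..4}" and k2: "(2::nat) \<in> {1..4}" and k3: "(3::nat) \<in> {1..4}" and k4: "(4::nat) \<in> {1..4}" by auto
  note PQ = pd_qf_exp[OF k1] pd_qf_exp[OF k2] pd_qf_exp[OF k3] pd_qf_exp[OF k4]
  have A1q: "c12 2 2 + (c12 1 2 + c12 2 1) * t + c12 1 1 * t^2 = 0" for t
    using F1[of "mk t 1 0 0", unfolded qf_exp coord_mk] by algebra
  have A1: "c12 2 2 = 0" "(c12 1 2 + c12 2 1) = 0" "c12 1 1 = 0" using quad0[OF A1q] by auto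
  have A2q: "c12 2 2 + (c12 2 3 + c12 3 2) * t + c12 3 3 * t^2 = 0" for t
    using F1[of "mk 0 1 t 0", unfolded qf_exp coord_mk] by algebra
  have A2: "c12 2 2 = 0" "(c12 2 3 + c12 3 2) = 0" "c12 3 3 = 0" using quad0[OF A2q] by auto
  have A3q: "c12 2 2 + (c12 2 4 + c12 4 2) * t + c12 4 4 * t^2 = 0" for t
    using F1[of "mk 0 1 0 t", unfolded qf_exp coord_mk] by algebra
  have A3: "c12 2 2 = 0" "(c12 2 4 + c12 4 2) = 0" "c12 4 4 = 0" using quad0[OF A3q] by auto
  note A4 = F1[of "mk 1 1 1 0", unfolded qf_exp coord_mk]
  note A5 = F1[of "mk 1 1 0 1", unfolded qf_exp coord_mk]
  note A6 = F1[of "mk 0 1 1 1", unfolded qf_exp coord_mk]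
  have Bgq: "c13 1 1 + (c13 1 3 + c13 3 1) * t + c13 3 3 * t^2 = 0" for t
    using F3[of "mk 1 0 t 0", unfolded qf_exp coord_mk] by algebra
  have Bg: "c13 1 1 = 0" "(c13 1 3 + c13 3 1) = 0" "c13 3 3 = 0" using quad0[OF Bgq] by auto
  have Bhq: "c13 1 1 + (c13 1 4 + c13 4 1) * t + c13 4 4 * t^2 = 0" for t
    using F3[of "mk 1 0 0 t", unfolded qf_exp coord_mk] by algebra
  have Bh: "c13 1 1 = 0" "(c13 1 4 + c13 4 1) = 0" "c13 4 4 = 0" using quad0[OF Bhq] by auto
  note Bi = F3[of "mk 1 0 1 1", unfolded qf_exp coord_mk]
  have Bjq: "c23 2 2 + (c23 2 3 + c23 3 2) * t + c23 3 3 * t^2 = 0" for t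
    using F3[of "mk 0 1 t 0", unfolded qf_exp coord_mk] by algebra
  have Bj: "c23 2 2 = 0" "(c23 2 3 + c23 3 2) = 0" "c23 3 3 = 0" using quad0[OF Bjq] by auto
  have Bkq: "c23 2 2 + (c23 2 4 + c23 4 2) * t + c23 4 4 * t^2 = 0" for t
    using F3[of "mk 0 1 0 t", unfolded qf_exp coord_mk] by algebra
  have Bk: "c23 2 2 = 0" "(c23 2 4 + c23 4 2) = 0" "c23 4 4 = 0" using quad0[OF Bkq] by auto
  note Bl = F3[of "mk 0 1 1 1", unfolded qf_exp coord_mk]
  have Bmq: "c13 1 1 + ((c13 1 2 + c13 2 1) - c23 1 1) * t + (c13 2 2 - (c23 1 2 + c23 2 1)) * t^2 + (- c23 2 2) * t^3 = 0" for t
    using F3[of "mk 1 t 0 0", unfolded qf_exp coord_mk] by algebra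
  have Bm: "c13 1 1 = 0" "((c13 1 2 + c13 2 1) - c23 1 1) = 0" "(c13 2 2 - (c23 1 2 + c23 2 1)) = 0" "(- c23 2 2) = 0" using cub0[OF Bmq] by auto
  note Bn = F3[of "mk 1 1 1 0", unfolded qf_exp coord_mk]
  note Bo = F3[of "mk 1 1 0 1", unfolded qf_exp coord_mk]
  have Cgq: "c14 1 1 + (c14 1 3 + c14 3 1) * t + c14 3 3 * t^2 = 0" for t
    using F4[of "mk 1 0 t 0", unfolded qf_exp coord_mk] by algebra
  have Cg: "c14 1 1 = 0" "(c14 1 3 + c14 3 1) = 0" "c14 3 3 = 0" using quad0[OF Cgq] by auto
  have Chq: "c14 1 1 + (c14 1 4 + c14 4 1) * t + c14 4 4 * t^2 = 0" for t
    using F4[of "mk 1 0 0 t", unfolded qf_exp coord_mk] by algebra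
  have Ch: "c14 1 1 = 0" "(c14 1 4 + c14 4 1) = 0" "c14 4 4 = 0" using quad0[OF Chq] by auto
  note Ci = F4[of "mk 1 0 1 1", unfolded qf_exp coord_mk]
  have Cjq: "c24 2 2 + (c24 2 3 + c24 3 2) * t + c24 3 3 * t^2 = 0" for t
    using F4[of "mk 0 1 t 0", unfolded qf_exp coord_mk] by algebra
  have Cj: "c24 2 2 = 0" "(c24 2 3 + c24 3 2) = 0" "c24 3 3 = 0" using quad0[OF Cjq] by auto
  have Ckq: "c24 2 2 + (c24 2 4 + c24 4 2) * t + c24 4 4 * t^2 = 0" for t
    using F4[of "mk 0 1 0 t", unfolded qf_exp coord_mk] by algebra
  have Ck: "c24 2 2 = 0" "(c24 2 4 + c24 4 2) = 0" "c24 4 4 = 0" using quad0[OF Ckq] by auto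
  note Cl = F4[of "mk 0 1 1 1", unfolded qf_exp coord_mk]
  have Cmq: "c14 1 1 + ((c14 1 2 + c14 2 1) - c24 1 1) * t + (c14 2 2 - (c24 1 2 + c24 2 1)) * t^2 + (- c24 2 2) * t^3 = 0" for t
    using F4[of "mk 1 t 0 0", unfolded qf_exp coord_mk] by algebra
  have Cm: "c14 1 1 = 0" "((c14 1 2 + c14 2 1) - c24 1 1) = 0" "(c14 2 2 - (c24 1 2 + c24 2 1)) = 0" "(- c24 2 2) = 0" using cub0[OF Cmq] by auto
  note Cn = F4[of "mk 1 1 1 0", unfolded qf_exp coord_mk]
  note Co = F4[of "mk 1 1 0 1", unfolded qf_exp coord_mk]
  note G1 = D123[of "mk 1 0 0 0", unfolded PQ coord_mk]
  note G2 = D123[of "mk 0 1 0 0", unfolded PQ coord_mk]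
  note G3 = D124[of "mk 1 0 0 0", unfolded PQ coord_mk]
  note G4 = D124[of "mk 0 1 0 0", unfolded PQ coord_mk]
  note H1 = D134[of "mk 1 0 0 0", unfolded PQ coord_mk]
  note H2 = D134[of "mk 0 0 1 0", unfolded PQ coord_mk]
  note H3 = D134[of "mk 0 0 0 1", unfolded PQ coord_mk]
  note H4 = D234[of "mk 0 1 0 0", unfolded PQ coord_mk]
  note H5 = D234[of "mk 0 0 1 0", unfolded PQ coord_mk]
  note H6 = D234[of "mk 0 0 0 1", unfolded PQ coord_mk]
  have E12: "qf c12 z = 0" for z unfolding qf_exp using A1 A2 A3 A4 A5 A6 by algebra
  have E13: "qf c13 z = coord 2 z * ((c13 2 3 + c13 3 2) * coord 3 z + (c13 2 4 + c13 4 2) * coord 4 z)" for z unfolding qf_exp using A1 A2 A3 A4 A5 A6 Bg Bh Bi Bj Bk Bl Bm Bn Bo G1 G2 by algebra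
  have E23: "qf c23 z = coord 1 z * ((c13 2 3 + c13 3 2) * coord 3 z + (c13 2 4 + c13 4 2) * coord 4 z)" for z unfolding qf_exp using A1 A2 A3 A4 A5 A6 Bg Bh Bi Bj Bk Bl Bm Bn Bo G1 G2 by algebra
  have E14: "qf c14 z = coord 2 z * ((c14 2 3 + c14 3 2) * coord 3 z + (c14 2 4 + c14 4 2) * coord 4 z)" for z unfolding qf_exp using A1 A2 A3 A4 A5 A6 Cg Ch Ci Cj Ck Cl Cm Cn Co G3 G4 by algebra
  have E24: "qf c24 z = coord 1 z * ((c14 2 3 + c14 3 2) * coord 3 z + (c14 2 4 + c14 4 2) * coord 4 z)" for z unfolding qf_exp using A1 A2 A3 A4 A5 A6 Cg Ch Ci Cj Ck Cl Cm Cn Co G3 G4 by algebra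
  have E34: "qf c34 z = (c34 1 2 + c34 2 1) * coord 1 z * coord 2 z + (c34 3 3 * coord 3 z ^ 2 + (c34 3 4 + c34 4 3) * coord 3 z * coord 4 z + c34 4 4 * coord 4 z ^ 2)" for z
    unfolding qf_exp using A1 A2 A3 A4 A5 A6 Bg Bh Bi Bj Bk Bl Bm Bn Bo Cg Ch Ci Cj Ck Cl Cm Cn Co G1 G2 G3 G4 H1 H2 H3 H4 H5 H6 by algebra
  show ?thesis
    apply (rule exI[where x="(c13 2 3 + c13 3 2)"], rule exI[where x="(c13 2 4 + c13 4 2)"])
    apply (rule exI[where x="(c14 2 3 + c14 3 2)"], rule exI[where x="(c14 2 4 + c14 4 2)"])
    apply (rule exI[where x="(c34 1 2 + c34 2 1)"], rule exI[where x="c34 3 3"])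
    apply (rule exI[where x="(c34 3 4 + c34 4 3)"], rule exI[where x="c34 4 4"])
    apply (rule final_form)
    apply (simp_all only: C12 C13 C14 C23 C24 C34 E12 E13 E14 E23 E24 E34)
    done
qed


end
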